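(* Let $\Gamma$ be a 3-colex with $v$ vertices, $f_{cc'}$ faces of color $cc'$ for each pair of distinct colors, and $\nu_c$ 3-cells of color $c$ for each color; let $f=\sum_{\{c,c'\}}f_{cc'}$ and $\nu=\sum_c\nu_c$. Let $c,c',d,d'$ be the four distinct colors. Then $\Gamma$ has $2v$ edges, and: (i) $\Gamma^*$ has $v$ 3-cells, $2v$ faces, $f$ edges and $\nu$ vertices; (ii) $\Gamma^{*\setminus c}$ has $\nu_c$ 3-cells, $v/2$ faces, $f_{dc'}+f_{c'd'}+f_{dd'}$ edges and $\nu_{c'}+\nu_d+\nu_{d'}$ vertices; (iii) $\Gamma^{*\setminus cc'}$ has $\nu_c+\nu_{c'}$ 3-cells, $f_{cc'}$ faces, $f_{dd'}$ edges and $\nu_d+\nu_{d'}$ vertices.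
   Context: Colors are $\{r,b,g,y\}$. A 3-colex $\Gamma$ is a 3-dimensional cell complex without boundary in which every vertex is 4-valent and lies in exactly four 3-cells, and whose 3-cells are properly 4-colored: every face lies in exactly two 3-cells, which have different colors. A 3-cell of color $c$ is a $c$-cell; a face of $\Gamma$ lying between a $c$-cell and a $c'$-cell has color $cc'$. The dual complex $\Gamma^*$ has an $i$-cell for every $(3-i)$-cell of $\Gamma$, with incidences reversed; every 3-cell of $\Gamma^*$ is a tetrahedron. A vertex of $\Gamma^*$ is given the color of the corresponding 3-cell of $\Gamma$; an edge of $\Gamma^*$ with endpoint colors $x,y$ is an $xy$-edge (it corresponds to an $xy$-face of $\Gamma$). The minor complex $\Gamma^{*\setminus c}$ is obtained from $\Gamma^*$ by deleting all vertices of color $c$ together with all edges and faces incident to them, and merging, for each $c$-vertex, all tetrahedra containing it into a single 3-cell. For distinct $c,c'$ with remaining colors $d,d'$, the minor complex $\Gamma^{*\setminus cc'}$ has as vertices the $d$- and $d'$-vertices of $\Gamma^*$, as edges the $dd'$-edges of $\Gamma^*$, one face $f_e$ for each $cc'$-edge $e$ of $\Gamma^*$ (bounded by the $dd'$-edges of the tetrahedra containing $e$), and one 3-cell for each vertex of $\Gamma^*$ of color $c$ or $c'$ (bounded by the faces $f_e$ for the $cc'$-edges $e$ incident on that vertex). *)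

theory Defs
  imports Complex_Main
begin

datatype color = Red | Blue | Green | Yellow

lemma UNIV_color: "(UNIV :: color set) = {Red, Blue, Green, Yellow}"
  using color.exhaust by auto

instance color :: finite
  by standard (simp add: UNIV_color)

text \<open>A cell complex is given by its sets of cells of each dimension
  (cells K i = set of i-cells) and its strict face relation
  (face_rel K x y: x is a proper face of y).\<close>

record 'a cplx =
  cells :: "nat \<Rightarrow> 'a set"
  face_rel :: "'a \<Rightarrow> 'a \<Rightarrow> bool"

definition cofaces :: "'a cplx \<Rightarrow> 'a \<Rightarrow> nat \<Rightarrow> 'a set" where
  "cofaces K x k = {y \<in> cells K k. face_rel K x y}"

definition ends :: "'a cplx \<Rightarrow> 'a \<Rightarrow> 'a set" where
  "ends K y = {x \<in> cells K 0. face_rel K x y}"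

text \<open>A finite 3-dimensional (regular) cell complex without boundary, in the
  combinatorial sense of its face poset: graded by dimension 0..3, every edge
  has two endpoints, diamond property, pure (every cell lies in a 3-cell) and
  every positive-dimensional cell has vertices.\<close>
definition cell_complex3 :: "'a cplx \<Rightarrow> bool" where
  "cell_complex3 K \<longleftrightarrow>
     (\<forall>i. finite (cells K i)) \<and>
     (\<forall>i>3. cells K i = {}) \<and>
     (\<forall>i j. i \<noteq> j \<longrightarrow> cells K i \<inter> cells K j = {}) \<and>
     (\<forall>x y. face_rel K x y \<longrightarrow> (\<exists>i j. i < j \<and> x \<in> cells K i \<and> y \<in> cells K j)) \<and>
     (\<forall>x y z. face_rel K x y \<longrightarrow> face_rel K y z \<longrightarrow> face_rel K x z) \<and>
     (\<forall>e\<in>cells K 1. card (ends K e) = 2) \<and>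
     (\<forall>i x z. x \<in> cells K i \<and> z \<in> cells K (i + 2) \<and> face_rel K x z \<longrightarrow>
        card {y \<in> cells K (i + 1). face_rel K x y \<and> face_rel K y z} = 2) \<and>
     (\<forall>i<3. \<forall>x\<in>cells K i. cofaces K x 3 \<noteq> {}) \<and>
     (\<forall>i>0. \<forall>x\<in>cells K i. ends K x \<noteq> {})"

text \<open>The last conjunct is the
  (manifold) local structure at a vertex: the cells around a vertex form the
  dual of a tetrahedron, i.e. every 3-cell of the dual complex is a tetrahedron
  (edges at x correspond to 3-subsets, faces at x to 2-subsets of the four
  3-cells at x, compatibly with incidence).\<close>
definition colex :: "'a cplx \<Rightarrow> ('a \<Rightarrow> color) \<Rightarrow> bool" where
  "colex K col \<longleftrightarrow> cell_complex3 K \<and>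
     (\<forall>x\<in>cells K 0. card (cofaces K x 1) = 4) \<and>
     (\<forall>x\<in>cells K 0. card (cofaces K x 3) = 4) \<and>
     (\<forall>f\<in>cells K 2. card (cofaces K f 3) = 2 \<and>
        (\<forall>z\<in>cofaces K f 3. \<forall>z'\<in>cofaces K f 3. z \<noteq> z' \<longrightarrow> col z \<noteq> col z')) \<and>
     (\<forall>x\<in>cells K 0.
        bij_betw (\<lambda>y. cofaces K y 3) (cofaces K x 1) {A. A \<subseteq> cofaces K x 3 \<and> card A = 3} \<and>
        bij_betw (\<lambda>y. cofaces K y 3) (cofaces K x 2) {A. A \<subseteq> cofaces K x 3 \<and> card A = 2} \<and>
        (\<forall>y\<in>cofaces K x 1. \<forall>w\<in>cofaces K x 2.
            face_rel K y w \<longleftrightarrow> cofaces K w 3 \<subseteq> cofaces K y 3))"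

definition face_color :: "'a cplx \<Rightarrow> ('a \<Rightarrow> color) \<Rightarrow> 'a \<Rightarrow> color set" where
  "face_color K col f = col ` cofaces K f 3"

definition nfaces :: "'a cplx \<Rightarrow> ('a \<Rightarrow> color) \<Rightarrow> color set \<Rightarrow> nat" where
  "nfaces K col P = card {f \<in> cells K 2. face_color K col f = P}"

definition ncells :: "'a cplx \<Rightarrow> ('a \<Rightarrow> color) \<Rightarrow> color \<Rightarrow> nat" where
  "ncells K col c = card {z \<in> cells K 3. col z = c}"

text \<open>Dual: i-cells are the (3-i)-cells, incidence reversed.  Vertices of the
  dual carry the color of the corresponding 3-cell (same coloring function).\<close>
definition dual :: "'a cplx \<Rightarrow> 'a cplx" where
  "dual K = \<lparr>cells = (\<lambda>i. if i \<le> 3 then cells K (3 - i) else {}),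
             face_rel = (\<lambda>x y. face_rel K y x)\<rparr>"

text \<open>Minor \<Gamma>*\c of a dual complex D: delete c-vertices and all cells incident
  to them; for each c-vertex z, the tetrahedra containing it are merged into one
  3-cell, represented by z itself.\<close>
definition minor1 :: "'a cplx \<Rightarrow> ('a \<Rightarrow> color) \<Rightarrow> color \<Rightarrow> 'a cplx" where
  "minor1 D col c =
    (let keep = (\<lambda>y. \<forall>x\<in>cells D 0. face_rel D x y \<longrightarrow> col x \<noteq> c);
         V = {x \<in> cells D 0. col x \<noteq> c};
         E = {y \<in> cells D 1. keep y};
         F = {y \<in> cells D 2. keep y};
         T = {x \<in> cells D 0. col x = c};
         L = V \<union> E \<union> F
     in \<lparr>cells = (\<lambda>i. if i = 0 then V else if i = 1 then E else if i = 2 then F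
                      else if i = 3 then T else {}),
         face_rel = (\<lambda>y z. (y \<in> L \<and> z \<in> L \<and> face_rel D y z) \<or>
                           (y \<in> L \<and> z \<in> T \<and>
                              (\<exists>t\<in>cells D 3. face_rel D z t \<and> face_rel D y t)))\<rparr>)"

text \<open>Minor \<Gamma>*\cc' of a dual complex D: vertices = d- and d'-vertices, edges =
  dd'-edges, one face f_e per cc'-edge e (represented by e), one 3-cell per
  vertex of color c or c' (represented by that vertex); incidences as described
  (transitive closure of the covering relations).\<close>
definition minor2 :: "'a cplx \<Rightarrow> ('a \<Rightarrow> color) \<Rightarrow> color \<Rightarrow> color \<Rightarrow> 'a cplx" where
  "minor2 D col c c' =
    (let V = {x \<in> cells D 0. col x \<notin> {c, c'}};
         E = {e \<in> cells D 1. col ` ends D e = - {c, c'}};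
         F = {e \<in> cells D 1. col ` ends D e = {c, c'}};
         T = {x \<in> cells D 0. col x \<in> {c, c'}};
         R = {(y, z). y \<in> V \<and> z \<in> E \<and> face_rel D y z} \<union>
             {(g, e). g \<in> E \<and> e \<in> F \<and> (\<exists>t\<in>cells D 3. face_rel D g t \<and> face_rel D e t)} \<union>
             {(e, x). e \<in> F \<and> x \<in> T \<and> face_rel D x e}
     in \<lparr>cells = (\<lambda>i. if i = 0 then V else if i = 1 then E else if i = 2 then F
                      else if i = 3 then T else {}),
         face_rel = (\<lambda>y z. (y, z) \<in> R\<^sup>+)\<rparr>)"

end

theory Submission imports Defs begin

lemma dc: "finite A \<Longrightarrow> finite B \<Longrightarrow>
  (\<Sum>a\<in>A. card {b\<in>B. R a b}) = (\<Sum>b\<in>B. card {a\<in>A. R a b})"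
proof -
  assume f: "finite A" "finite B"
  have 1: "\<And>a. card {b\<in>B. R a b} = (\<Sum>b\<in>B. if R a b then 1 else 0)"
    by (simp only: card_eq_sum sum.inter_filter[OF f(2)])
  have 2: "\<And>b. card {a\<in>A. R a b} = (\<Sum>a\<in>A. if R a b then 1 else 0)"
    by (simp only: card_eq_sum sum.inter_filter[OF f(1)])
  show ?thesis unfolding 1 2 by (rule sum.swap)
qed

lemma card_group: "finite A \<Longrightarrow> finite B \<Longrightarrow> g ` A \<subseteq> B \<Longrightarrow>
   card A = (\<Sum>b\<in>B. card {a\<in>A. g a = b})"
  using sum.group[of A B g "\<lambda>_. 1::nat"] by (simp only: card_eq_sum)

lemma univ4: "distinct [c, c', d, d'] \<Longrightarrow> (UNIV::color set) = {c,c',d,d'}"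
proof -
  assume a: "distinct [c, c', d, d']"
  have "card {c,c',d,d'} = 4" using a by simp
  moreover have "card (UNIV::color set) = 4" by (simp add: UNIV_color)
  ultimately show ?thesis by (metis card_subset_eq finite subset_UNIV)
qed


lemma colex_cc: "colex K col \<Longrightarrow> cell_complex3 K" unfolding colex_def by simp
lemma colex_v1: "colex K col \<Longrightarrow> x\<in>cells K 0 \<Longrightarrow> card (cofaces K x 1) = 4"
  unfolding colex_def by simp
lemma colex_v3: "colex K col \<Longrightarrow> x\<in>cells K 0 \<Longrightarrow> card (cofaces K x 3) = 4"
  unfolding colex_def by simp
lemma colex_f: "colex K col \<Longrightarrow> f\<in>cells K 2 \<Longrightarrow> card (cofaces K f 3) = 2 \<and>
        (\<forall>z\<in>cofaces K f 3. \<forall>z'\<in>cofaces K f 3. z \<noteq> z' \<longrightarrow> col z \<noteq> col z')"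
  unfolding colex_def by simp
lemma colex_b1: "colex K col \<Longrightarrow> x\<in>cells K 0 \<Longrightarrow> bij_betw (\<lambda>y. cofaces K y 3) (cofaces K x 1) {A. A \<subseteq> cofaces K x 3 \<and> card A = 3}"
  unfolding colex_def by simp
lemma colex_b2: "colex K col \<Longrightarrow> x\<in>cells K 0 \<Longrightarrow> bij_betw (\<lambda>y. cofaces K y 3) (cofaces K x 2) {A. A \<subseteq> cofaces K x 3 \<and> card A = 2}"
  unfolding colex_def by simp
lemma cc_fin: "cell_complex3 K \<Longrightarrow> finite (cells K i)" unfolding cell_complex3_def
  apply (elim conjE) apply (erule_tac x=i in allE) apply assumption done
lemma cc_ends: "cell_complex3 K \<Longrightarrow> e \<in> cells K 1 \<Longrightarrow> card (ends K e) = 2"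
  unfolding cell_complex3_def apply (elim conjE) apply (erule_tac x=e in ballE) apply assumption apply (erule notE, assumption) done

lemma col_inj_vertex:
  assumes "colex K col" "x \<in> cells K 0"
  shows "inj_on col (cofaces K x 3)"
proof (rule inj_onI, rule ccontr)
  fix z z' assume z: "z \<in> cofaces K x 3" "z' \<in> cofaces K x 3" "col z = col z'" "z \<noteq> z'"
  have b: "bij_betw (\<lambda>y. cofaces K y 3) (cofaces K x 2) {A. A \<subseteq> cofaces K x 3 \<and> card A = 2}"
    using colex_b2[OF assms] .
  have "{z,z'} \<in> {A. A \<subseteq> cofaces K x 3 \<and> card A = 2}" using z by auto
  then have "{z,z'} \<in> (\<lambda>y. cofaces K y 3) ` cofaces K x 2"
    using bij_betw_imp_surj_on[OF b] by simp
  then obtain w where w: "w \<in> cofaces K x 2" "cofaces K w 3 = {z,z'}"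
    by (auto simp del: image_iff elim!: imageE)
  have "w \<in> cells K 2" using w by (simp add: cofaces_def)
  then have h: "\<forall>z\<in>cofaces K w 3. \<forall>z'\<in>cofaces K w 3. z \<noteq> z' \<longrightarrow> col z \<noteq> col z'"
    using colex_f[OF assms(1)] by blast
  have "z \<in> cofaces K w 3" "z' \<in> cofaces K w 3" using w(2) by simp_all
  then have "col z \<noteq> col z'" using h z(4) by blast
  then show False using z(3) by simp
qed

lemma fc_card:
  assumes "colex K col" "y \<in> cells K 2"
  shows "card (face_color K col y) = 2"
proof -
  have h: "card (cofaces K y 3) = 2 \<and> (\<forall>z\<in>cofaces K y 3. \<forall>z'\<in>cofaces K y 3. z \<noteq> z' \<longrightarrow> col z \<noteq> col z')"
    using colex_f[OF assms] .
  then have "inj_on col (cofaces K y 3)" unfolding inj_on_def by blast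
  then show ?thesis using h by (simp add: face_color_def card_image)
qed

lemma col_onto:
  assumes "colex K col" "x \<in> cells K 0"
  shows "col ` cofaces K x 3 = UNIV"
proof -
  have S4: "card (cofaces K x 3) = 4" using colex_v3[OF assms] .
  have "card (col ` cofaces K x 3) = 4" using col_inj_vertex[OF assms] S4 by (simp add: card_image)
  moreover have "card (UNIV::color set) = 4" by (simp add: UNIV_color)
  ultimately show ?thesis using card_subset_eq[of UNIV "col ` cofaces K x 3"] by simp
qed

lemma one_kept:
  assumes "colex K col" "x \<in> cells K 0"
  shows "card {e \<in> cofaces K x 1. \<forall>z\<in>cofaces K e 3. col z \<noteq> c} = 1"
proof -
  let ?S = "cofaces K x 3"
  let ?phi = "\<lambda>y. cofaces K y 3"
  have b: "bij_betw ?phi (cofaces K x 1) {A. A \<subseteq> ?S \<and> card A = 3}"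
    using colex_b1[OF assms] .
  have S4: "card ?S = 4" using colex_v3[OF assms] .
  have fin: "finite ?S" using S4 by (simp add: card_ge_0_finite)
  have inj: "inj_on col ?S" using col_inj_vertex[OF assms] .
  have "c \<in> col ` ?S" using col_onto[OF assms] by simp
  then obtain z0 where z0: "z0 \<in> ?S" "col z0 = c" by (auto simp del: image_iff elim!: imageE)
  have eq: "{A. A \<subseteq> ?S \<and> card A = 3 \<and> (\<forall>z\<in>A. col z \<noteq> c)} = {?S - {z0}}"
  proof (rule set_eqI, rule iffI)
    fix A assume "A \<in> {A. A \<subseteq> ?S \<and> card A = 3 \<and> (\<forall>z\<in>A. col z \<noteq> c)}"
    then have A: "A \<subseteq> ?S" "card A = 3" "\<forall>z\<in>A. col z \<noteq> c" by auto
    have "A \<subseteq> ?S - {z0}" using A z0 by auto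
    moreover have "card (?S - {z0}) = 3" using S4 z0 fin by simp
    ultimately show "A \<in> {?S - {z0}}" using A fin card_subset_eq[of "?S - {z0}" A] by simp
  next
    fix A assume "A \<in> {?S - {z0}}"
    then have A: "A = ?S - {z0}" by simp
    have "\<forall>z\<in>A. col z \<noteq> c" using A z0 inj unfolding inj_on_def by blast
    then show "A \<in> {A. A \<subseteq> ?S \<and> card A = 3 \<and> (\<forall>z\<in>A. col z \<noteq> c)}"
      using A S4 z0 fin by simp
  qed
  have injphi: "inj_on ?phi (cofaces K x 1)" using b by (simp add: bij_betw_def)
  have im: "?phi ` {e \<in> cofaces K x 1. \<forall>z\<in>cofaces K e 3. col z \<noteq> c}
        = {A. A \<subseteq> ?S \<and> card A = 3 \<and> (\<forall>z\<in>A. col z \<noteq> c)}"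
  proof -
    have "?phi ` {e \<in> cofaces K x 1. \<forall>z\<in>cofaces K e 3. col z \<noteq> c} = {A \<in> ?phi ` cofaces K x 1. \<forall>z\<in>A. col z \<noteq> c}"
      by (auto simp: image_iff)
    also have "\<dots> = {A. A \<subseteq> ?S \<and> card A = 3 \<and> (\<forall>z\<in>A. col z \<noteq> c)}"
      using bij_betw_imp_surj_on[OF b] by simp
    finally show ?thesis .
  qed
  have ij: "inj_on ?phi {e \<in> cofaces K x 1. \<forall>z\<in>cofaces K e 3. col z \<noteq> c}"
    using injphi by (rule inj_on_subset) auto
  have "card {e \<in> cofaces K x 1. \<forall>z\<in>cofaces K e 3. col z \<noteq> c}
     = card (?phi ` {e \<in> cofaces K x 1. \<forall>z\<in>cofaces K e 3. col z \<noteq> c})"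
    using card_image[OF ij] by simp
  also have "\<dots> = 1" unfolding im eq by simp
  finally show ?thesis .
qed


lemma ends_dual: "ends (dual K) e = cofaces K e 3"
  by (auto simp: ends_def dual_def cofaces_def)

lemma cells_dual: "cells (dual K) 0 = cells K 3" "cells (dual K) 1 = cells K 2"
  "cells (dual K) 2 = cells K 1" "cells (dual K) 3 = cells K 0"
  "face_rel (dual K) x y = face_rel K y x"
  by (simp_all add: dual_def)

lemma cells_minor1:
  "cells (minor1 D col c) 0 = {x \<in> cells D 0. col x \<noteq> c}"
  "cells (minor1 D col c) 1 = {y \<in> cells D 1. \<forall>x\<in>cells D 0. face_rel D x y \<longrightarrow> col x \<noteq> c}"
  "cells (minor1 D col c) 2 = {y \<in> cells D 2. \<forall>x\<in>cells D 0. face_rel D x y \<longrightarrow> col x \<noteq> c}"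
  "cells (minor1 D col c) 3 = {x \<in> cells D 0. col x = c}"
  by (simp_all add: minor1_def Let_def)

lemma cells_minor2:
  "cells (minor2 D col c c') 0 = {x \<in> cells D 0. col x \<notin> {c, c'}}"
  "cells (minor2 D col c c') 1 = {e \<in> cells D 1. col ` ends D e = - {c, c'}}"
  "cells (minor2 D col c c') 2 = {e \<in> cells D 1. col ` ends D e = {c, c'}}"
  "cells (minor2 D col c c') 3 = {x \<in> cells D 0. col x \<in> {c, c'}}"
  by (simp_all add: minor2_def Let_def)

lemma two_sets:
  assumes "distinct [c, c', d, d']" "card (P::color set) = 2" "c \<notin> P"
  shows "P \<in> {{d,c'},{c',d'},{d,d'}}"
proof -
  obtain a b where P: "P = {a,b}" "a \<noteq> b" using assms(2) unfolding card_2_iff by blast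
  have U: "(UNIV::color set) = {c,c',d,d'}" using univ4[OF assms(1)] .
  have "a \<in> {c,c',d,d'}" "b \<in> {c,c',d,d'}" unfolding U[symmetric] by simp_all
  moreover have "a \<noteq> c" "b \<noteq> c" using P assms(3) by auto
  ultimately have "a = c' \<or> a = d \<or> a = d'" "b = c' \<or> b = d \<or> b = d'" by auto
  then show ?thesis using P by (elim disjE) (simp_all add: insert_commute)
qed


lemma restrict_col: "c \<notin> P \<Longrightarrow> {a \<in> {y \<in> S. c \<notin> g y}. g a = P} = {a \<in> S. g a = P}"
  by auto

lemma restrict_col2: "c \<notin> P \<Longrightarrow> {a \<in> S. c \<notin> g a \<and> g a = P} = {a \<in> S. g a = P}"
  by auto

lemma restrict3: "b \<noteq> a \<Longrightarrow> {x \<in> S. g x \<noteq> a \<and> g x = b} = {x \<in> S. g x = b}"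
  by auto
lemma restrict4: "b \<noteq> a \<Longrightarrow> b \<noteq> a' \<Longrightarrow> {x \<in> S. g x \<noteq> a \<and> g x \<noteq> a' \<and> g x = b} = {x \<in> S. g x = b}"
  by auto
lemma restrict5: "{x \<in> S. (g x = a \<or> g x = a') \<and> g x = a} = {x \<in> S. g x = a}"
   "{x \<in> S. (g x = a \<or> g x = a') \<and> g x = a'} = {x \<in> S. g x = a'}"
  by auto

lemma finite_2sets: "finite {P :: color set. card P = 2}"
  by (rule finite_subset[of _ UNIV]) auto

theorem corollary1:
  fixes K :: "'a cplx" and col :: "'a \<Rightarrow> color" and c c' d d' :: color
  assumes "colex K col"
    and "distinct [c, c', d, d']"
  defines "v \<equiv> card (cells K 0)"
    and "f \<equiv> (\<Sum>P\<in>{P :: color set. card P = 2}. nfaces K col P)"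
    and "\<nu> \<equiv> (\<Sum>e\<in>(UNIV :: color set). ncells K col e)"
  shows "card (cells K 1) = 2 * v \<and>
    (card (cells (dual K) 3) = v \<and> card (cells (dual K) 2) = 2 * v \<and>
     card (cells (dual K) 1) = f \<and> card (cells (dual K) 0) = \<nu>) \<and>
    (card (cells (minor1 (dual K) col c) 3) = ncells K col c \<and>
     real (card (cells (minor1 (dual K) col c) 2)) = real v / 2 \<and>
     card (cells (minor1 (dual K) col c) 1) =
        nfaces K col {d, c'} + nfaces K col {c', d'} + nfaces K col {d, d'} \<and>
     card (cells (minor1 (dual K) col c) 0) = ncells K col c' + ncells K col d + ncells K col d') \<and>
    (card (cells (minor2 (dual K) col c c') 3) = ncells K col c + ncells K col c' \<and>
     card (cells (minor2 (dual K) col c c') 2) = nfaces K col {c, c'} \<and>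
     card (cells (minor2 (dual K) col c c') 1) = nfaces K col {d, d'} \<and>
     card (cells (minor2 (dual K) col c c') 0) = ncells K col d + ncells K col d')"
proof -
  have cc: "cell_complex3 K" using colex_cc[OF assms(1)] .
  have fin: "\<And>i. finite (cells K i)" using cc_fin[OF cc] .
  have U: "(UNIV::color set) = {c,c',d,d'}" using univ4[OF assms(2)] .
  have dist: "c \<noteq> c'" "c \<noteq> d" "c \<noteq> d'" "c' \<noteq> d" "c' \<noteq> d'" "d \<noteq> d'"
    using assms(2) by auto
  have inU: "\<And>x. x \<in> {c,c',d,d'}" unfolding U[symmetric] by simp
  have e1: "card (cells K 1) = 2 * v"
  proof -
    have "(\<Sum>a\<in>cells K 0. card {b\<in>cells K 1. face_rel K a b})
        = (\<Sum>b\<in>cells K 1. card {a\<in>cells K 0. face_rel K a b})"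
      by (rule dc) (rule fin)+
    moreover have "(\<Sum>a\<in>cells K 0. card {b\<in>cells K 1. face_rel K a b}) = (\<Sum>a\<in>cells K 0. 4)"
    proof (rule sum.cong)
      fix a assume "a \<in> cells K 0"
      then show "card {b\<in>cells K 1. face_rel K a b} = 4"
        using colex_v1[OF assms(1)] unfolding cofaces_def by blast
    qed simp
    moreover have "(\<Sum>b\<in>cells K 1. card {a\<in>cells K 0. face_rel K a b}) = (\<Sum>b\<in>cells K 1. 2)"
    proof (rule sum.cong)
      fix b assume "b \<in> cells K 1"
      then show "card {a\<in>cells K 0. face_rel K a b} = 2"
        using cc_ends[OF cc] unfolding ends_def by blast
    qed simp
    ultimately show ?thesis unfolding v_def by simp
  qed
  have fsum: "card (cells K 2) = f"
  proof -
    have "card (cells K 2) = (\<Sum>P\<in>{P :: color set. card P = 2}. card {a\<in>cells K 2. face_color K col a = P})"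
      by (rule card_group[OF fin finite_2sets]) (auto intro: fc_card[OF assms(1)])
    then show ?thesis unfolding f_def nfaces_def .
  qed
  have nusum: "card (cells K 3) = \<nu>"
  proof -
    have "card (cells K 3) = (\<Sum>e\<in>(UNIV::color set). card {a\<in>cells K 3. col a = e})"
      by (rule card_group[OF fin]) auto
    then show ?thesis unfolding \<nu>_def ncells_def .
  qed
  define Fk where "Fk = {y\<in>cells K 1. \<forall>x\<in>cells K 3. face_rel K y x \<longrightarrow> col x \<noteq> c}"
  have finFk: "finite Fk" unfolding Fk_def using fin by simp
  have Fk2: "v = 2 * card Fk"
  proof -
    have "(\<Sum>a\<in>cells K 0. card {b\<in>Fk. face_rel K a b})
        = (\<Sum>b\<in>Fk. card {a\<in>cells K 0. face_rel K a b})"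
      by (rule dc) (rule fin, rule finFk)
    moreover have "(\<Sum>a\<in>cells K 0. card {b\<in>Fk. face_rel K a b}) = (\<Sum>a\<in>cells K 0. 1)"
    proof (rule sum.cong)
      fix a assume a: "a \<in> cells K 0"
      have "{b\<in>Fk. face_rel K a b} = {e \<in> cofaces K a 1. \<forall>z\<in>cofaces K e 3. col z \<noteq> c}"
        unfolding Fk_def cofaces_def by auto
      then show "card {b\<in>Fk. face_rel K a b} = 1" using one_kept[OF assms(1) a] by simp
    qed simp
    moreover have "(\<Sum>b\<in>Fk. card {a\<in>cells K 0. face_rel K a b}) = (\<Sum>b\<in>Fk. 2)"
    proof (rule sum.cong)
      fix b assume "b \<in> Fk"
      then have "b \<in> cells K 1" unfolding Fk_def by simp
      then show "card {a\<in>cells K 0. face_rel K a b} = 2"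
        using cc_ends[OF cc] unfolding ends_def by blast
    qed simp
    ultimately show ?thesis unfolding v_def by simp
  qed
  have m1_2: "cells (minor1 (dual K) col c) 2 = Fk"
    unfolding Fk_def cells_minor1 cells_dual ..
  have keepfc: "\<And>y. (\<forall>x\<in>cells K 3. face_rel K y x \<longrightarrow> col x \<noteq> c) \<longleftrightarrow> c \<notin> face_color K col y"
    unfolding face_color_def cofaces_def by auto
  have m1_1: "cells (minor1 (dual K) col c) 1 = {y \<in> cells K 2. c \<notin> face_color K col y}"
    unfolding cells_minor1 cells_dual keepfc ..
  let ?B3 = "{{d,c'},{c',d'},{d,d'}} :: color set set"
  have c1: "card {y \<in> cells K 2. c \<notin> face_color K col y} =
       (\<Sum>P\<in>?B3. card {a\<in>{y \<in> cells K 2. c \<notin> face_color K col y}. face_color K col a = P})"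
    by (rule card_group) (use fin two_sets[OF assms(2)] fc_card[OF assms(1)] in auto)
  have c1': "card {y \<in> cells K 2. c \<notin> face_color K col y} =
      nfaces K col {d, c'} + nfaces K col {c', d'} + nfaces K col {d, d'}"
  proof -
    have n1: "{d,c'} \<noteq> {c',d'}" "{d,c'} \<noteq> {d,d'}" "{c',d'} \<noteq> {d,d'}"
      using dist by (auto simp: doubleton_eq_iff)
    show ?thesis unfolding c1 nfaces_def using n1 dist
      by (simp add: restrict_col restrict_col2 add.assoc)
  qed
  have m1_0: "card (cells (minor1 (dual K) col c) 0) = ncells K col c' + ncells K col d + ncells K col d'"
  proof -
    have "card {x \<in> cells K 3. col x \<noteq> c} = (\<Sum>e\<in>{c',d,d'}. card {a\<in>{x \<in> cells K 3. col x \<noteq> c}. col a = e})"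
      by (rule card_group) (use fin inU in auto)
    also have "\<dots> = ncells K col c' + ncells K col d + ncells K col d'"
      unfolding ncells_def using dist by (simp add: restrict_col restrict3 restrict4 restrict5 add.assoc)
    finally show ?thesis unfolding cells_minor1 cells_dual .
  qed
  have compl: "- {c, c'} = {d, d'}"
  proof (rule set_eqI)
    fix x show "x \<in> - {c, c'} \<longleftrightarrow> x \<in> {d, d'}" using inU[of x] dist by auto
  qed
  have m2_0: "card (cells (minor2 (dual K) col c c') 0) = ncells K col d + ncells K col d'"
  proof -
    have "card {x \<in> cells K 3. col x \<notin> {c,c'}} = (\<Sum>e\<in>{d,d'}. card {a\<in>{x \<in> cells K 3. col x \<notin> {c,c'}}. col a = e})"
      by (rule card_group) (use fin inU in auto)
    also have "\<dots> = ncells K col d + ncells K col d'"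
      unfolding ncells_def using dist by (simp add: restrict_col restrict3 restrict4 restrict5 add.assoc)
    finally show ?thesis unfolding cells_minor2 cells_dual .
  qed
  have m2_3: "card (cells (minor2 (dual K) col c c') 3) = ncells K col c + ncells K col c'"
  proof -
    have "card {x \<in> cells K 3. col x \<in> {c,c'}} = (\<Sum>e\<in>{c,c'}. card {a\<in>{x \<in> cells K 3. col x \<in> {c,c'}}. col a = e})"
      by (rule card_group) (use fin in auto)
    also have "\<dots> = ncells K col c + ncells K col c'"
      unfolding ncells_def using dist by (simp add: restrict_col restrict3 restrict4 restrict5 add.assoc)
    finally show ?thesis unfolding cells_minor2 cells_dual .
  qed
  have m2_2: "cells (minor2 (dual K) col c c') 2 = {a \<in> cells K 2. face_color K col a = {c,c'}}"
    unfolding cells_minor2 cells_dual ends_dual face_color_def ..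
  have m2_1: "cells (minor2 (dual K) col c c') 1 = {a \<in> cells K 2. face_color K col a = {d,d'}}"
    unfolding cells_minor2 cells_dual ends_dual face_color_def compl ..
  show ?thesis
  proof (intro conjI)
    show "card (cells K 1) = 2 * v" by (rule e1)
    show "card (cells (dual K) 3) = v" unfolding cells_dual v_def ..
    show "card (cells (dual K) 2) = 2 * v" unfolding cells_dual by (rule e1)
    show "card (cells (dual K) 1) = f" unfolding cells_dual by (rule fsum)
    show "card (cells (dual K) 0) = \<nu>" unfolding cells_dual by (rule nusum)
    show "card (cells (minor1 (dual K) col c) 3) = ncells K col c"
      unfolding cells_minor1 cells_dual ncells_def ..
    show "real (card (cells (minor1 (dual K) col c) 2)) = real v / 2"
      unfolding m1_2 Fk2 by simp
    show "card (cells (minor1 (dual K) col c) 1) =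
        nfaces K col {d, c'} + nfaces K col {c', d'} + nfaces K col {d, d'}"
      unfolding m1_1 by (rule c1')
    show "card (cells (minor1 (dual K) col c) 0) = ncells K col c' + ncells K col d + ncells K col d'"
      by (rule m1_0)
    show "card (cells (minor2 (dual K) col c c') 3) = ncells K col c + ncells K col c'"
      by (rule m2_3)
    show "card (cells (minor2 (dual K) col c c') 2) = nfaces K col {c, c'}"
      unfolding m2_2 nfaces_def ..
    show "card (cells (minor2 (dual K) col c c') 1) = nfaces K col {d, d'}"
      unfolding m2_1 nfaces_def ..
    show "card (cells (minor2 (dual K) col c c') 0) = ncells K col d + ncells K col d'"
      by (rule m2_0)
  qed
qed

end
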